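(* Let $p$ be a prime, $q=p^2$, for $a\in\mathbb{F}_q$ write $\bar a = a^p$, $N(a)=a^{p+1}$, let $Q = \{(a,b) \in \mathbb{F}_q^2 : N(a)+N(b)=1\}$ and for $x=(a,b)\in Q$ let $\ell_x = \{(a+t\bar b,\ b-t\bar a): t\in\mathbb{F}_q\}$. Define $$S' = \{(x,y) \in \mathbb{F}_q^2 \times \mathbb{F}_q^2 : x \in Q,\ y \in \ell_x\}.$$ Then $|S'| = q\,|Q|$, and $S'$ contains no three points of the form $(x,y),(x,y+d),(x+d,y')$ with $x,y,y' \in \mathbb{F}_q^2$ and $d \in \mathbb{F}_q^2\setminus\{0\}$. *)

theory Defs
  imports Main "HOL-Computational_Algebra.Primes" "HOL-Library.Product_Plus"
begin

definition fconj :: "nat \<Rightarrow> 'a::field \<Rightarrow> 'a" where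
  "fconj p a = a ^ p"

definition fnorm :: "nat \<Rightarrow> 'a::field \<Rightarrow> 'a" where
  "fnorm p a = a ^ (p + 1)"

definition Qset :: "nat \<Rightarrow> ('a::field \<times> 'a) set" where
  "Qset p = {(a, b). fnorm p a + fnorm p b = 1}"

definition ell :: "nat \<Rightarrow> ('a::field \<times> 'a) \<Rightarrow> ('a \<times> 'a) set" where
  "ell p x = (case x of (a, b) \<Rightarrow>
      {(a + t * fconj p b, b - t * fconj p a) | t. True})"

definition Sprime :: "nat \<Rightarrow> (('a::field \<times> 'a) \<times> ('a \<times> 'a)) set" where
  "Sprime p = {(x, y). x \<in> Qset p \<and> y \<in> ell p x}"

end

theory Submission
  imports Defs "HOL-Number_Theory.Residues"
begin

lemma fin_field_pow_card:
  fixes x :: "'a :: {field,finite}"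
  shows   "x ^ card (UNIV :: 'a set) = x"
proof (cases "x = 0")
  case False
  have "x * (\<Prod>y\<in>UNIV-{0}. x * y) = x * x ^ (card (UNIV :: 'a set) - 1) * \<Prod>(UNIV-{0})"
    by (simp add: prod.distrib mult_ac)
  also have "x * x ^ (card (UNIV :: 'a set) - 1) = x ^ Suc (card (UNIV :: 'a set) - 1)"
    by (subst power_Suc) auto
  also have "Suc (card (UNIV :: 'a set) - 1) = card (UNIV :: 'a set)"
    using finite_UNIV_card_ge_0[where ?'a = 'a] by simp
  also have "(\<Prod>y\<in>UNIV-{0}. x * y) = (\<Prod>y\<in>UNIV-{0}. y)"
    by (rule prod.reindex_bij_witness[of _ "\<lambda>y. y / x" "\<lambda>y. x * y"]) (use False in auto)
  finally show ?thesis
    by simp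
qed (use finite_UNIV_card_ge_0[where ?'a = 'a] in auto)

lemma char_eq:
  assumes "prime p" and "card (UNIV :: 'a::{field,finite} set) = p ^ 2"
  shows "CHAR('a) = p"
proof -
  have pos: "CHAR('a) > 0" by (simp add: finite_imp_CHAR_pos)
  have pr: "prime CHAR('a)" using prime_CHAR_semidom[OF pos] .
  have "CHAR('a) dvd p ^ 2" using CHAR_dvd_CARD[where 'a='a] assms(2) by simp
  then have "CHAR('a) dvd p" using pr prime_dvd_power by blast
  then show ?thesis using pr assms(1) primes_dvd_imp_eq by blast
qed

theorem mainTheorem4:
  fixes p :: nat
  assumes "prime p"
    and "card (UNIV :: 'a::{field,finite} set) = p ^ 2"
  shows "card (Sprime p :: (('a \<times> 'a) \<times> ('a \<times> 'a)) set)
           = card (UNIV :: 'a set) * card (Qset p :: ('a \<times> 'a) set)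
         \<and> \<not> (\<exists>x y y' d. d \<noteq> (0 :: 'a \<times> 'a)
               \<and> (x, y) \<in> Sprime p \<and> (x, y + d) \<in> Sprime p
               \<and> (x + d, y') \<in> Sprime p)"
proof
  have p0: "p > 0" using assms(1) prime_gt_0_nat by blast
  have S: "Sprime p = (SIGMA x:Qset p. ell p x)"
    unfolding Sprime_def by auto
  have cardell: "card (ell p x) = card (UNIV :: 'a set)" if "x \<in> (Qset p :: ('a\<times>'a) set)" for x
  proof -
    obtain a b where x: "x = (a, b)" by (cases x)
    have nz: "a \<noteq> 0 \<or> b \<noteq> 0" using that p0 unfolding x Qset_def fnorm_def by auto
    have e: "ell p x = (\<lambda>t. (a + t * fconj p b, b - t * fconj p a)) ` UNIV"
      unfolding x ell_def by auto
    have "inj (\<lambda>t::'a. (a + t * fconj p b, b - t * fconj p a))"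
    proof (rule injI)
      fix s t :: 'a assume "(a + s * fconj p b, b - s * fconj p a) = (a + t * fconj p b, b - t * fconj p a)"
      then have "(s - t) * fconj p b = 0" "(s - t) * fconj p a = 0" by (auto simp: algebra_simps)
      then show "s = t" using nz unfolding fconj_def by auto
    qed
    then show ?thesis unfolding e by (simp add: card_image)
  qed
  show "card (Sprime p :: (('a \<times> 'a) \<times> ('a \<times> 'a)) set)
           = card (UNIV :: 'a set) * card (Qset p :: ('a \<times> 'a) set)"
    unfolding S by (subst card_SigmaI) (auto simp: cardell)
next
  have ch: "CHAR('a) = p" using char_eq[OF assms] .
  have pr: "prime CHAR('a)" using ch assms(1) by simp
  have fd: "(u + v) ^ p = u ^ p + v ^ p" for u v :: 'a
    using freshmans_dream[OF pr ch[symmetric]] .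
  have mp: "(- u) ^ p = - (u ^ p)" for u :: 'a
    using minus_power_prime_CHAR[OF ch[symmetric] assms(1)] .
  have pp: "(u ^ p) ^ p = u" for u :: 'a
    using fin_field_pow_card[of u] assms(2) by (simp add: power_mult[symmetric] power2_eq_square)
  show "\<not> (\<exists>x y y' d. d \<noteq> (0 :: 'a \<times> 'a)
               \<and> (x, y) \<in> Sprime p \<and> (x, y + d) \<in> Sprime p
               \<and> (x + d, y') \<in> Sprime p)"
  proof
    assume "\<exists>x y y' d. d \<noteq> (0 :: 'a \<times> 'a)
               \<and> (x, y) \<in> Sprime p \<and> (x, y + d) \<in> Sprime p
               \<and> (x + d, y') \<in> Sprime p"
    then obtain x y y' d where d0: "d \<noteq> (0 :: 'a \<times> 'a)" and h1: "(x, y) \<in> Sprime p"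
      and h2: "(x, y + d) \<in> Sprime p" and h3: "(x + d, y') \<in> Sprime p" by blast
    obtain a b where x: "x = (a, b)" by (cases x)
    define A where "A = a ^ p"
    define B where "B = b ^ p"
    have Q: "A * a + B * b = 1" using h1 unfolding x Sprime_def Qset_def fnorm_def A_def B_def
      by (simp add: mult.commute)
    obtain t where y: "y = (a + t * B, b - t * A)"
      using h1 unfolding x Sprime_def ell_def fconj_def A_def B_def by auto
    obtain t' where y2: "y + d = (a + t' * B, b - t' * A)"
      using h2 unfolding x Sprime_def ell_def fconj_def A_def B_def by auto
    define s where "s = t' - t"
    have d: "d = (s * B, - (s * A))"
      using y y2 unfolding s_def
      by (cases d) (auto simp: algebra_simps)
    have s0: "s \<noteq> 0" using d0 d by (auto simp: zero_prod_def)
    have E0: "(a + s * B) ^ (p + 1) + (b - s * A) ^ (p + 1) = 1"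
      using h3 unfolding x d Sprime_def Qset_def fnorm_def by simp
    moreover have E1: "(a + s * B) ^ (p + 1) = (A + s^p * b) * (a + s * B)"
      by (simp add: fd power_mult_distrib B_def pp A_def)
    moreover have E2: "(b - s * A) ^ (p + 1) = (B - s^p * a) * (b - s * A)"
    proof -
      have "(b + - (s * A)) ^ p = B - s^p * a"
        unfolding fd mp by (simp add: power_mult_distrib B_def pp A_def)
      then have "(b - s * A) ^ p = B - s^p * a" by simp
      then show ?thesis by (simp add: mult.commute)
    qed
    have "(A + s^p * b) * (a + s * B) + (B - s^p * a) * (b - s * A) = 1"
      using E0 E1 E2 by metis
    then have "(A * a + B * b) * (1 + s ^ p * s) = 1"
      by (simp add: algebra_simps)
    then have "s ^ p * s = 0" using Q by simp
    then show False using s0 by simp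
  qed
qed

end
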